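(* Let $X$ be a real Banach space with the fixed point property, and let $f:X\to X$ be nonexpansive and real analytic. If $f$ has more than one fixed point, then the set of fixed points of $f$ is unbounded.
   Context: $X$ has the fixed point property if for every nonempty closed, bounded, convex $C\subset X$ and every nonexpansive $g:C\to C$, $g$ has a fixed point in $C$. Nonexpansive: $\|f(x)-f(y)\|\le\|x-y\|$. Real analytic (weak sense): for all $x,y\in X$ and $z^*\in X^*$, the function $t\mapsto z^*(f(x+ty))$ is real analytic on $\mathbb{R}$. *)

theory Defs
  imports "HOL-Analysis.Analysis"
begin

definition nonexpansive_on :: "'a::real_normed_vector set \<Rightarrow> ('a \<Rightarrow> 'a) \<Rightarrow> bool" where
  "nonexpansive_on C g \<longleftrightarrow> (\<forall>x\<in>C. \<forall>y\<in>C. norm (g x - g y) \<le> norm (x - y))"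

definition fixed_point_property :: "'a::real_normed_vector itself \<Rightarrow> bool" where
  "fixed_point_property TYPE('a) \<longleftrightarrow>
     (\<forall>(C::'a set) g. C \<noteq> {} \<and> closed C \<and> bounded C \<and> convex C \<and>
        g ` C \<subseteq> C \<and> nonexpansive_on C g \<longrightarrow> (\<exists>x\<in>C. g x = x))"

definition real_analytic :: "(real \<Rightarrow> real) \<Rightarrow> bool" where
  "real_analytic h \<longleftrightarrow>
     (\<forall>t0. \<exists>r>0. \<exists>a::nat \<Rightarrow> real. \<forall>t. \<bar>t - t0\<bar> < r \<longrightarrow>
        (\<lambda>n. a n * (t - t0) ^ n) sums h t)"

definition weakly_real_analytic :: "('a::real_normed_vector \<Rightarrow> 'a) \<Rightarrow> bool" where
  "weakly_real_analytic f \<longleftrightarrow>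
     (\<forall>x y. \<forall>z::'a \<Rightarrow> real. bounded_linear z \<longrightarrow> real_analytic (\<lambda>t. z (f (x + t *\<^sub>R y))))"

end

theory Submission
  imports Defs "HOL-Complex_Analysis.Cauchy_Integral_Formula"
begin

definition sublin :: "('a::real_vector \<Rightarrow> real) \<Rightarrow> bool" where
  "sublin P \<longleftrightarrow> (\<forall>x y. P (x + y) \<le> P x + P y) \<and> (\<forall>t x. 0 \<le> t \<longrightarrow> P (t *\<^sub>R x) = t * P x)"

definition dirq :: "('a::real_vector \<Rightarrow> real) \<Rightarrow> 'a \<Rightarrow> 'a \<Rightarrow> real" where
  "dirq q a x = (INF t\<in>{0::real..}. q (x + t *\<^sub>R a) - t * q a)"

lemma sublin_add: "sublin P \<Longrightarrow> P (x + y) \<le> P x + P y"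
  by (simp add: sublin_def)
lemma sublin_scale: "sublin P \<Longrightarrow> 0 \<le> t \<Longrightarrow> P (t *\<^sub>R x) = t * P x"
  by (simp add: sublin_def)
lemma sublin_0: "sublin P \<Longrightarrow> P 0 = 0"
  using sublin_scale[of P 0 0] by simp
lemma sublin_neg: "sublin P \<Longrightarrow> - P (- x) \<le> P x"
  using sublin_add[of P x "-x"] sublin_0[of P] by simp

lemma dirq_bdd:
  assumes "sublin q"
  shows "bdd_below ((\<lambda>t. q (x + t *\<^sub>R a) - t * q a) ` {0..})"
proof (rule bdd_belowI2[where m="- q (- x)"])
  fix t :: real assume "t \<in> {0..}"
  hence "q (t *\<^sub>R a) = t * q a" using assms sublin_scale by auto
  moreover have "q (t *\<^sub>R a) \<le> q (x + t *\<^sub>R a) + q (- x)"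
    using sublin_add[OF assms, of "x + t *\<^sub>R a" "-x"] by simp
  ultimately show "- q (- x) \<le> q (x + t *\<^sub>R a) - t * q a" by simp
qed

lemma dirq_le: "sublin q \<Longrightarrow> 0 \<le> t \<Longrightarrow> dirq q a x \<le> q (x + t *\<^sub>R a) - t * q a"
  unfolding dirq_def by (rule cINF_lower[OF dirq_bdd]) auto

lemma dirq_ge: "(\<And>t. 0 \<le> t \<Longrightarrow> m \<le> q (x + t *\<^sub>R a) - t * q a) \<Longrightarrow> m \<le> dirq q a x"
  unfolding dirq_def by (rule cINF_greatest) auto

lemma dirq_below: "sublin q \<Longrightarrow> dirq q a x \<le> q x"
  using dirq_le[of q 0 a x] by simp

lemma dirq_neg: "sublin q \<Longrightarrow> dirq q a (- a) \<le> - q a"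
  using dirq_le[of q 1 a "-a"] sublin_0[of q] by simp

lemma dirq_sublin:
  assumes q: "sublin q"
  shows "sublin (dirq q a)"
  unfolding sublin_def
proof (intro conjI allI impI)
  fix x y
  have "\<forall>t1\<ge>0. \<forall>t2\<ge>0. dirq q a (x + y) - (q (y + t2 *\<^sub>R a) - t2 * q a) \<le> q (x + t1 *\<^sub>R a) - t1 * q a"
  proof (intro allI impI)
    fix t1 t2 :: real assume t: "0 \<le> t1" "0 \<le> t2"
    have "dirq q a (x + y) \<le> q ((x + y) + (t1 + t2) *\<^sub>R a) - (t1 + t2) * q a"
      using t by (intro dirq_le q) auto
    also have "q ((x + y) + (t1 + t2) *\<^sub>R a) \<le> q (x + t1 *\<^sub>R a) + q (y + t2 *\<^sub>R a)"
      using sublin_add[OF q, of "x + t1 *\<^sub>R a" "y + t2 *\<^sub>R a"]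
      by (simp add: algebra_simps scaleR_add_left)
    finally show "dirq q a (x + y) - (q (y + t2 *\<^sub>R a) - t2 * q a) \<le> q (x + t1 *\<^sub>R a) - t1 * q a"
      by (simp add: algebra_simps)
  qed
  hence "\<forall>t2\<ge>0. dirq q a (x + y) - (q (y + t2 *\<^sub>R a) - t2 * q a) \<le> dirq q a x"
    by (auto intro: dirq_ge)
  hence "\<forall>t2\<ge>0. dirq q a (x + y) - dirq q a x \<le> q (y + t2 *\<^sub>R a) - t2 * q a"
    by force
  hence "dirq q a (x + y) - dirq q a x \<le> dirq q a y"
    by (auto intro: dirq_ge)
  thus "dirq q a (x + y) \<le> dirq q a x + dirq q a y" by simp
next
  fix s :: real and x assume s: "0 \<le> s"
  show "dirq q a (s *\<^sub>R x) = s * dirq q a x"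
  proof (cases "s = 0")
    case True
    have "dirq q a 0 = 0"
    proof (rule antisym)
      show "dirq q a 0 \<le> 0" using dirq_below[OF q, of a 0] sublin_0[OF q] by simp
      show "0 \<le> dirq q a 0"
        by (rule dirq_ge) (simp add: sublin_scale[OF q])
    qed
    thus ?thesis using True by simp
  next
    case False
    hence sp: "0 < s" using s by simp
    have "\<forall>t\<ge>0. dirq q a (s *\<^sub>R x) / s \<le> q (x + t *\<^sub>R a) - t * q a"
    proof (intro allI impI)
      fix t :: real assume t: "0 \<le> t"
      have "dirq q a (s *\<^sub>R x) \<le> q (s *\<^sub>R x + (s * t) *\<^sub>R a) - (s * t) * q a"
        using t s by (intro dirq_le q) auto
      also have "q (s *\<^sub>R x + (s * t) *\<^sub>R a) = s * q (x + t *\<^sub>R a)"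
        using sublin_scale[OF q s, of "x + t *\<^sub>R a"] by (simp add: scaleR_add_right)
      finally show "dirq q a (s *\<^sub>R x) / s \<le> q (x + t *\<^sub>R a) - t * q a"
        using sp by (simp add: divide_simps algebra_simps)
    qed
    hence 1: "dirq q a (s *\<^sub>R x) / s \<le> dirq q a x" by (auto intro: dirq_ge)
    have "s * dirq q a x \<le> dirq q a (s *\<^sub>R x)"
    proof (rule dirq_ge)
      fix t :: real assume t: "0 \<le> t"
      have "dirq q a x \<le> q (x + (t / s) *\<^sub>R a) - (t / s) * q a"
        using t sp by (intro dirq_le q) auto
      hence "s * dirq q a x \<le> s * (q (x + (t / s) *\<^sub>R a) - (t / s) * q a)"
        using sp by (intro mult_left_mono) auto
      also have "\<dots> = s * q (x + (t / s) *\<^sub>R a) - t * q a"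
        using sp by (simp add: algebra_simps)
      also have "s * q (x + (t / s) *\<^sub>R a) = q (s *\<^sub>R x + t *\<^sub>R a)"
        using sublin_scale[OF q s, of "x + (t / s) *\<^sub>R a"] sp by (simp add: scaleR_add_right)
      finally show "s * dirq q a x \<le> q (s *\<^sub>R x + t *\<^sub>R a) - t * q a" .
    qed
    with 1 sp show ?thesis by (simp add: divide_simps mult.commute)
  qed
qed


lemma sublin_min_linear:
  assumes q: "sublin q" and minq: "\<And>a. dirq q a = q"
  shows "linear q"
proof -
  have neg: "q (- a) = - q a" for a
    using dirq_neg[OF q, of a] minq[of a] sublin_neg[OF q, of a] by simp
  have add: "q (x + y) = q x + q y" for x y
  proof (rule antisym)
    show "q (x + y) \<le> q x + q y" by (rule sublin_add[OF q])
    have "q x \<le> q (x + y) + q (- y)" using sublin_add[OF q, of "x + y" "-y"] by simp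
    thus "q x + q y \<le> q (x + y)" using neg[of y] by simp
  qed
  have sc: "q (c *\<^sub>R x) = c * q x" for c x
  proof (cases "0 \<le> c")
    case True thus ?thesis using sublin_scale[OF q] by blast
  next
    case False
    hence "q (c *\<^sub>R x) = q (- ((- c) *\<^sub>R x))" by simp
    also have "\<dots> = - q ((- c) *\<^sub>R x)" by (rule neg)
    also have "\<dots> = c * q x" using sublin_scale[OF q, of "-c" x] False by simp
    finally show ?thesis .
  qed
  show ?thesis by (rule linearI) (simp_all add: add sc)
qed

lemma sublin_linear_below:
  fixes Q :: "'a::real_vector \<Rightarrow> real"
  assumes Q: "sublin Q"
  shows "\<exists>u. linear u \<and> (\<forall>x. u x \<le> Q x)"
proof -
  define S where "S = {q. sublin q \<and> (\<forall>x. q x \<le> Q x)}"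
  define r where "r = {(q1, q2). q1 \<in> S \<and> q2 \<in> S \<and> (\<forall>x. q2 x \<le> q1 x)}"
  have QS: "Q \<in> S" using Q by (simp add: S_def)
  have Field: "Field r = S"
    unfolding r_def Field_def by auto
  have po: "Partial_order r"
    unfolding partial_order_on_def preorder_on_def refl_on_def trans_on_def antisym_on_def Field
    unfolding r_def by (auto intro!: ext intro: order_trans antisym)
  have ub: "\<exists>u\<in>Field r. \<forall>a\<in>C. (a, u) \<in> r" if C: "C \<in> Chains r" for C
  proof (cases "C = {}")
    case True thus ?thesis using QS Field by auto
  next
    case False
    have CS: "C \<subseteq> S" using C unfolding Chains_def r_def by auto
    have lb: "- Q (- x) \<le> q x" if "q \<in> C" for q x
    proof -
      have "sublin q" "q (- x) \<le> Q (- x)" using that CS unfolding S_def by auto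
      thus ?thesis using sublin_neg[of q x] by linarith
    qed
    have bdd: "bdd_below ((\<lambda>q. q x) ` C)" for x
      using lb by (intro bdd_belowI2) 
    define g where "g x = (INF q\<in>C. q x)" for x
    have gle: "g x \<le> q x" if "q \<in> C" for q x
      unfolding g_def using that bdd by (intro cINF_lower) auto
    have gge: "m \<le> g x" if "\<And>q. q \<in> C \<Longrightarrow> m \<le> q x" for m x
      unfolding g_def using that False by (intro cINF_greatest) auto
    have chain: "\<And>q1 q2. q1 \<in> C \<Longrightarrow> q2 \<in> C \<Longrightarrow> (\<forall>x. q2 x \<le> q1 x) \<or> (\<forall>x. q1 x \<le> q2 x)"
      using C unfolding Chains_def r_def by blast
    have subl: "sublin q" if "q \<in> C" for q using that CS S_def by auto
    have gsub: "sublin g"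
      unfolding sublin_def
    proof (intro conjI allI impI)
      fix x y
      have "g (x + y) - q2 y \<le> q1 x" if q12: "q1 \<in> C" "q2 \<in> C" for q1 q2
      proof -
        from chain[OF q12] obtain q where q: "q \<in> C" "\<forall>z. q z \<le> q1 z" "\<forall>z. q z \<le> q2 z"
          using q12 by (metis order_refl)
        have "g (x + y) \<le> q (x + y)" by (rule gle[OF q(1)])
        also have "\<dots> \<le> q x + q y" by (rule sublin_add[OF subl[OF q(1)]])
        also have "\<dots> \<le> q1 x + q2 y" using q by (intro add_mono) auto
        finally show ?thesis by simp
      qed
      hence "g (x + y) - q2 y \<le> g x" if "q2 \<in> C" for q2
        using that by (intro gge) auto
      hence "g (x + y) - g x \<le> q2 y" if "q2 \<in> C" for q2
        using that by force
      hence "g (x + y) - g x \<le> g y" by (intro gge) auto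
      thus "g (x + y) \<le> g x + g y" by simp
    next
      fix t :: real and x assume t: "0 \<le> t"
      show "g (t *\<^sub>R x) = t * g x"
      proof (cases "t = 0")
        case True
        have "g 0 = 0"
        proof (rule antisym)
          obtain q where "q \<in> C" using False by auto
          thus "g 0 \<le> 0" using gle[of q 0] sublin_0[OF subl] by force
          show "0 \<le> g 0" by (rule gge) (simp add: sublin_0[OF subl])
        qed
        thus ?thesis using True by simp
      next
        case False
        hence tp: "0 < t" using t by simp
        have "g (t *\<^sub>R x) / t \<le> q x" if "q \<in> C" for q
          using gle[OF that, of "t *\<^sub>R x"] sublin_scale[OF subl[OF that] t, of x] tp
          by (simp add: divide_simps mult.commute)
        hence 1: "g (t *\<^sub>R x) / t \<le> g x" by (intro gge)
        have "t * g x \<le> g (t *\<^sub>R x)"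
        proof (rule gge)
          fix q assume q: "q \<in> C"
          have "t * g x \<le> t * q x" using gle[OF q] t by (intro mult_left_mono)
          thus "t * g x \<le> q (t *\<^sub>R x)" using sublin_scale[OF subl[OF q] t] by simp
        qed
        with 1 tp show ?thesis by (simp add: divide_simps mult.commute)
      qed
    qed
    obtain q0 where "q0 \<in> C" using False by auto
    hence gQ: "\<forall>x. g x \<le> Q x" using gle[of q0] CS unfolding S_def by (blast intro: order_trans)
    hence gS: "g \<in> S" using gsub S_def by auto
    show ?thesis
      using gS CS gle Field unfolding r_def by auto
  qed
  from Zorns_po_lemma[OF po ub] obtain m where m: "m \<in> S"
    and max: "\<And>a. a \<in> S \<Longrightarrow> (m, a) \<in> r \<Longrightarrow> a = m" using Field by auto
  have msub: "sublin m" and mQ: "\<forall>x. m x \<le> Q x" using m S_def by auto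
  have "dirq m a = m" for a
  proof (rule max)
    show "dirq m a \<in> S" using dirq_sublin[OF msub] dirq_below[OF msub] mQ unfolding S_def
      by (blast intro: order_trans)
    thus "(m, dirq m a) \<in> r" using m dirq_below[OF msub] r_def by auto
  qed
  hence "linear m" by (rule sublin_min_linear[OF msub])
  thus ?thesis using mQ by blast
qed

lemma hahn_banach_point:
  fixes P :: "'a::real_vector \<Rightarrow> real"
  assumes P: "sublin P"
  shows "\<exists>u. linear u \<and> (\<forall>x. u x \<le> P x) \<and> u v = P v"
proof -
  obtain u where u: "linear u" "\<forall>x. u x \<le> dirq P v x"
    using sublin_linear_below[OF dirq_sublin[OF P]] by blast
  have le: "\<forall>x. u x \<le> P x" using u(2) dirq_below[OF P] order_trans by blast
  have "u (- v) \<le> - P v" using u(2) dirq_neg[OF P, of v] order_trans by blast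
  hence "P v \<le> u v" using linear_neg[OF u(1), of v] by simp
  with le have "u v = P v" using antisym by blast
  with u le show ?thesis by blast
qed

lemma sublin_norm: "sublin (norm :: 'a::real_normed_vector \<Rightarrow> real)"
  unfolding sublin_def by (auto intro: norm_triangle_ineq)


lemma real_analytic_isCont:
  assumes "real_analytic g"
  shows "isCont g t0"
proof -
  obtain r a where r: "r > 0" and sm: "\<And>t. \<bar>t - t0\<bar> < r \<Longrightarrow> (\<lambda>n. a n * (t - t0) ^ n) sums g t"
    using assms unfolding real_analytic_def by blast
  define G where "G h = (\<Sum>n. a n * h ^ n)" for h :: real
  have "summable (\<lambda>n. a n * (r/2) ^ n)"
    using sm[of "t0 + r/2"] r by (auto simp: sums_iff)
  hence cG: "isCont G 0" unfolding G_def
    by (rule isCont_powser) (use r in auto)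
  have c1: "isCont (\<lambda>t. t - t0) t0" by (intro continuous_intros)
  have "isCont G ((\<lambda>t. t - t0) t0)" using cG by simp
  from isCont_o2[OF c1 this] have "isCont (\<lambda>t. G (t - t0)) t0" .
  moreover have "eventually (\<lambda>t. G (t - t0) = g t) (nhds t0)"
    unfolding eventually_nhds_metric
    using r sm by (auto intro!: exI[of _ r] simp: dist_real_def G_def sums_iff)
  ultimately show ?thesis using isCont_cong[of "\<lambda>t. G (t - t0)" g t0] by blast
qed

lemma real_analytic_affine_diff:
  assumes "real_analytic g"
  shows "real_analytic (\<lambda>t. g t - (A + B * t))"
  unfolding real_analytic_def
proof
  fix t0
  obtain r a where r: "r > 0" and sm: "\<And>t. \<bar>t - t0\<bar> < r \<Longrightarrow> (\<lambda>n. a n * (t - t0) ^ n) sums g t"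
    using assms unfolding real_analytic_def by blast
  define b where "b n = (if n = 0 then a 0 - (A + B * t0) else if n = 1 then a 1 - B else a n)" for n
  have "(\<lambda>n. b n * (t - t0) ^ n) sums (g t - (A + B * t))" if t: "\<bar>t - t0\<bar> < r" for t
  proof -
    have fin: "(\<lambda>n. if n \<in> {0,1} then (if n = 0 then A + B * t0 else B * (t - t0)) else 0) sums
       (\<Sum>n \<in> {0::nat,1}. (if n = 0 then A + B * t0 else B * (t - t0)))"
      by (rule sums_If_finite_set) auto
    have "(\<Sum>n \<in> {0::nat,1}. (if n = 0 then A + B * t0 else B * (t - t0))) = A + B * t"
      by (simp add: algebra_simps)
    with fin have fin2: "(\<lambda>n. if n \<in> {0,1} then (if n = 0 then A + B * t0 else B * (t - t0)) else 0) sums (A + B * t)"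
      by (simp only:)
    have "(\<lambda>n. a n * (t - t0) ^ n - (if n \<in> {0,1} then (if n = 0 then A + B * t0 else B * (t - t0)) else 0))
          sums (g t - (A + B * t))"
      by (rule sums_diff[OF sm[OF t] fin2])
    moreover have "(\<lambda>n. a n * (t - t0) ^ n - (if n \<in> {0,1} then (if n = 0 then A + B * t0 else B * (t - t0)) else 0))
        = (\<lambda>n. b n * (t - t0) ^ n)"
      by (auto simp: b_def algebra_simps)
    ultimately show ?thesis by simp
  qed
  thus "\<exists>r>0. \<exists>a. \<forall>t. \<bar>t - t0\<bar> < r \<longrightarrow> (\<lambda>n. a n * (t - t0) ^ n) sums (g t - (A + B * t))"
    using r by blast
qed

lemma real_analytic_zero:
  assumes an: "real_analytic g" and z: "\<And>t. 0 \<le> t \<Longrightarrow> t \<le> 1 \<Longrightarrow> g t = 0"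
  shows "g t = 0"
proof -
  define Z where "Z = {t. \<exists>e>0. \<forall>s. \<bar>s - t\<bar> < e \<longrightarrow> g s = 0}"
  have Zg: "g s = 0" if "s \<in> Z" for s using that Z_def by force
  have oZ: "open Z"
    unfolding open_dist
  proof (intro ballI)
    fix t assume "t \<in> Z"
    then obtain e where e: "e > 0" "\<forall>s. \<bar>s - t\<bar> < e \<longrightarrow> g s = 0" using Z_def by auto
    show "\<exists>e>0. \<forall>y. dist y t < e \<longrightarrow> y \<in> Z"
    proof (intro exI[of _ e] conjI allI impI)
      fix y assume y: "dist y t < e"
      show "y \<in> Z" unfolding Z_def
        using e y by (intro CollectI exI[of _ "e - dist y t"]) (auto simp: dist_real_def)
    qed (use e in auto)
  qed
  have oZc: "open (- Z)"
    unfolding open_dist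
  proof (intro ballI)
    fix t assume tZ: "t \<in> - Z"
    show "\<exists>e>0. \<forall>y. dist y t < e \<longrightarrow> y \<in> - Z"
    proof (cases "g t = 0")
      case False
      have "isCont g t" by (rule real_analytic_isCont[OF an])
      hence "eventually (\<lambda>s. g s \<noteq> 0) (at t)"
        using False unfolding isCont_def by (rule tendsto_imp_eventually_ne)
      then obtain e where e0: "e > 0" "\<And>s. s \<noteq> t \<Longrightarrow> dist s t < e \<Longrightarrow> g s \<noteq> 0"
        unfolding eventually_at by auto
      hence e: "e > 0" "\<And>s. dist s t < e \<Longrightarrow> g s \<noteq> 0" using False by metis+
      show ?thesis
      proof (intro exI[of _ e] conjI allI impI)
        fix y assume "dist y t < e"
        hence "g y \<noteq> 0" by (rule e(2))
        thus "y \<in> - Z" using Zg by auto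
      qed (rule e(1))
    next
      case True
      obtain r a where r: "r > 0" and sm: "\<And>s. \<bar>s - t\<bar> < r \<Longrightarrow> (\<lambda>n. a n * (s - t) ^ n) sums g s"
        using an unfolding real_analytic_def by blast
      have "(\<lambda>n. a n * 0 ^ n) sums g t" using sm[of t] r by simp
      hence "g t = a 0" by (rule sums_unique2[OF _ powser_sums_zero])
      hence a0: "a 0 = 0" using True by simp
      show ?thesis
      proof (cases "\<exists>m>0. a m \<noteq> 0")
        case False
        have "g s = 0" if "\<bar>s - t\<bar> < r" for s
        proof -
          have "(\<lambda>n. a n * (s - t) ^ n) = (\<lambda>n. 0)"
          proof
            fix n show "a n * (s - t) ^ n = 0"
            proof (cases "n = 0")
              case True thus ?thesis using a0 by simp
            next
              case n: False
              hence "n > 0" by simp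
              hence "a n = 0" using False by blast
              thus ?thesis by simp
            qed
          qed
          hence "(\<lambda>n. 0) sums g s" using sm[OF that] by simp
          from sums_unique2[OF sums_zero this] show ?thesis by simp
        qed
        hence "t \<in> Z" unfolding Z_def using r by blast
        thus ?thesis using tZ by auto
      next
        case True
        then obtain m where m: "m > 0" "a m \<noteq> 0" by blast
        have smn: "\<And>x. norm (x - t) < r \<Longrightarrow> (\<lambda>n. a n * (x - t) ^ n) sums g x"
          using sm by simp
        obtain s0 where s0: "0 < s0" "\<And>z. z \<in> cball t s0 - {t} \<Longrightarrow> g z \<noteq> 0"
          using powser_0_nonzero[OF r smn \<open>g t = 0\<close> m(2) m(1)] by blast
        show ?thesis
        proof (intro exI[of _ s0] conjI allI impI)
          fix y assume y: "dist y t < s0"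
          show "y \<in> - Z"
          proof
            assume "y \<in> Z"
            then obtain e where e: "e > 0" "\<And>s. \<bar>s - y\<bar> < e \<Longrightarrow> g s = 0" unfolding Z_def by blast
            show False
            proof (cases "y = t")
              case False
              have "g y = 0" using e by simp
              moreover have "y \<in> cball t s0 - {t}" using y False by (simp add: dist_commute)
              ultimately show False using s0(2) by blast
            next
              case True
              define z where "z = t + min e s0 / 2"
              have "\<bar>z - y\<bar> < e" using e(1) s0(1) True by (simp add: z_def)
              hence "g z = 0" by (rule e(2))
              moreover have "z \<in> cball t s0 - {t}" using e s0 by (auto simp: z_def dist_real_def)
              ultimately show False using s0(2) by blast
            qed
          qed
        qed (use s0 in auto)
      qed
    qed
  qed
  have hZ: "1/2 \<in> Z" unfolding Z_def
  proof (intro CollectI exI[of _ "1/2"] conjI allI impI)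
    fix s :: real assume "\<bar>s - 1/2\<bar> < 1/2"
    hence "0 \<le> s" "s \<le> 1" by linarith+
    thus "g s = 0" by (rule z)
  qed simp
  have "Z \<inter> UNIV = {} \<or> - Z \<inter> UNIV = {}"
    by (rule connectedD[OF connected_UNIV oZ oZc]) auto
  hence "Z = UNIV" using hZ by auto
  thus ?thesis using Zg by auto
qed


theorem theorem5p3:
  fixes f :: "'a::banach \<Rightarrow> 'a"
  assumes "fixed_point_property TYPE('a)"
    and "nonexpansive_on UNIV f"
    and "weakly_real_analytic f"
    and "\<exists>p q. p \<noteq> q \<and> f p = p \<and> f q = q"
  shows "\<not> bounded {x. f x = x}"
proof
  assume bF: "bounded {x. f x = x}"
  have ne: "\<And>x y. norm (f x - f y) \<le> norm (x - y)"
    using assms(2) unfolding nonexpansive_on_def by blast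
  obtain p q where pq: "p \<noteq> q" "f p = p" "f q = q" using assms(4) by blast
  obtain B where B: "\<And>y. f y = y \<Longrightarrow> dist p y \<le> B"
    using bF unfolding bounded_any_center[of _ p] by blast
  have B0: "0 \<le> B" using B[of p] pq by simp
  define e where "e = q - p"
  define d where "d = norm e"
  have d0: "d > 0" using pq by (simp add: d_def e_def)
  define U where "U = {u. linear u \<and> (\<forall>x. u x \<le> norm x) \<and> u e = d}"
  define P where "P = dirq norm e"
  have Psub: "sublin P" unfolding P_def by (rule dirq_sublin[OF sublin_norm])
  have HBU: "\<exists>u\<in>U. P v \<le> u v" for v
  proof -
    obtain u where u: "linear u" "\<forall>x. u x \<le> P x" "u v = P v"
      using hahn_banach_point[OF Psub] by blast
    have un: "u x \<le> norm x" for x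
      using u(2) dirq_below[OF sublin_norm, of e x] unfolding P_def by (blast intro: order_trans)
    have "P (- e) \<le> norm (- e + 1 *\<^sub>R e) - 1 * norm e"
      unfolding P_def by (rule dirq_le[OF sublin_norm]) simp
    hence "P (- e) \<le> - d" by (simp add: d_def)
    hence "u (- e) \<le> - d" using u(2) order_trans by blast
    hence "d \<le> u e" using linear_neg[OF u(1), of e] by simp
    moreover have "u e \<le> d" using un[of e] d_def by simp
    ultimately have "u e = d" by simp
    thus ?thesis using u un U_def by auto
  qed
  have Ubl: "bounded_linear u" if "u \<in> U" for u
  proof -
    have l: "linear u" and le: "\<And>x. u x \<le> norm x" using that U_def by auto
    have "norm (u x) \<le> norm x * 1" for x
      using le[of x] le[of "-x"] linear_neg[OF l, of x] by auto
    thus ?thesis using l by (intro bounded_linear_intro[of _ 1]) (simp_all add: linear_add linear_scale)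
  qed
  have line: "u (f (p + s *\<^sub>R e)) = u p + s * d" if uU: "u \<in> U" for u s
  proof -
    have l: "linear u" and le: "\<And>x. u x \<le> norm x" and ue: "u e = d" using uU U_def by auto
    have seg: "u (f (p + t *\<^sub>R e)) - (u p + t * d) = 0" if t: "0 \<le> t" "t \<le> 1" for t
    proof -
      define x where "x = p + t *\<^sub>R e"
      have "u (f x) - u p = u (f x - f p)" using pq l by (simp add: linear_diff)
      also have "\<dots> \<le> norm (f x - f p)" by (rule le)
      also have "\<dots> \<le> norm (x - p)" by (rule ne)
      also have "\<dots> = t * d" using t by (simp add: x_def d_def)
      finally have 1: "u (f x) \<le> u p + t * d" by simp
      have "u q - u (f x) = u (f q - f x)" using pq l by (simp add: linear_diff)
      also have "\<dots> \<le> norm (f q - f x)" by (rule le)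
      also have "\<dots> \<le> norm (q - x)" by (rule ne)
      also have "q - x = (1 - t) *\<^sub>R e" by (simp add: x_def e_def algebra_simps)
      also have "norm \<dots> = (1 - t) * d" using t by (simp add: d_def)
      finally have 2: "u q - (1 - t) * d \<le> u (f x)" by simp
      have "u q = u p + d" using ue l by (simp add: e_def linear_diff)
      with 1 2 show ?thesis by (simp add: x_def algebra_simps)
    qed
    have "real_analytic (\<lambda>t. u (f (p + t *\<^sub>R e)))"
      using assms(3) Ubl[OF uU] unfolding weakly_real_analytic_def by blast
    hence "real_analytic (\<lambda>t. u (f (p + t *\<^sub>R e)) - (u p + d * t))"
      by (rule real_analytic_affine_diff)
    hence "u (f (p + s *\<^sub>R e)) - (u p + d * s) = 0"
      by (rule real_analytic_zero) (use seg in \<open>simp add: mult.commute\<close>)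
    thus ?thesis by (simp add: mult.commute)
  qed
  have h1: "- u (f w - p) \<le> P (p - w)" if uU: "u \<in> U" for u w
    unfolding P_def
  proof (rule dirq_ge)
    fix t :: real assume "0 \<le> t"
    have l: "linear u" and le: "\<And>x. u x \<le> norm x" using uU U_def by auto
    have "u (f (p + t *\<^sub>R e)) - u (f w) = u (f (p + t *\<^sub>R e) - f w)" using l by (simp add: linear_diff)
    also have "\<dots> \<le> norm (f (p + t *\<^sub>R e) - f w)" by (rule le)
    also have "\<dots> \<le> norm (p + t *\<^sub>R e - w)" by (rule ne)
    finally have "u p + t * d - u (f w) \<le> norm (p - w + t *\<^sub>R e)"
      using line[OF uU, of t] by (simp add: algebra_simps)
    moreover have "u (f w - p) = u (f w) - u p" using l by (simp add: linear_diff)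
    ultimately show "- u (f w - p) \<le> norm (p - w + t *\<^sub>R e) - t * norm e"
      by (simp add: d_def)
  qed
  define R where "R = B + 1"
  define K where "K = {w. (\<forall>u\<in>U. R \<le> u (w - p)) \<and> norm (w - p) \<le> R}"
  define x0 where "x0 = p + (R / d) *\<^sub>R e"
  have x0K: "x0 \<in> K"
  proof -
    have "norm (x0 - p) = R" using d0 B0 by (simp add: x0_def d_def R_def)
    moreover have "u (x0 - p) = R" if "u \<in> U" for u
      using that d0 by (simp add: U_def x0_def linear_scale)
    ultimately show ?thesis by (simp add: K_def)
  qed
  have Kc: "closed K"
  proof -
    have "K = (\<Inter>u\<in>U. {w. R \<le> u (w - p)}) \<inter> {w. norm (w - p) \<le> R}"
      by (auto simp: K_def)
    moreover have "closed {w. R \<le> u (w - p)}" if "u \<in> U" for u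
    proof (rule closed_Collect_le)
      show "continuous_on UNIV (\<lambda>w. u (w - p))"
        by (rule bounded_linear.continuous_on[OF Ubl[OF that]]) (intro continuous_intros)
    qed (intro continuous_intros)
    moreover have "closed {w. norm (w - p) \<le> R}"
      by (intro closed_Collect_le continuous_intros)
    ultimately show ?thesis by (auto intro!: closed_INT closed_Int)
  qed
  have Kb: "bounded K"
  proof (rule bounded_subset[OF bounded_cball[of p R]])
    show "K \<subseteq> cball p R" by (auto simp: K_def dist_norm norm_minus_commute)
  qed
  have Kcv: "convex K"
    unfolding convex_def
  proof (intro ballI allI impI)
    fix x y and a b :: real assume x: "x \<in> K" and y: "y \<in> K" and ab: "0 \<le> a" "0 \<le> b" "a + b = 1"
    have eq: "a *\<^sub>R x + b *\<^sub>R y - p = a *\<^sub>R (x - p) + b *\<^sub>R (y - p)"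
      using ab by (simp add: algebra_simps flip: scaleR_add_left)
    have "R \<le> u (a *\<^sub>R x + b *\<^sub>R y - p)" if uU: "u \<in> U" for u
    proof -
      have l: "linear u" using uU U_def by auto
      have "a * R + b * R \<le> a * u (x - p) + b * u (y - p)"
        using x y uU ab by (intro add_mono mult_left_mono) (auto simp: K_def)
      also have "\<dots> = u (a *\<^sub>R x + b *\<^sub>R y - p)"
        unfolding eq using l by (simp add: linear_add linear_scale)
      finally have "a * R + b * R \<le> u (a *\<^sub>R x + b *\<^sub>R y - p)" .
      moreover have "a * R + b * R = R"
      proof -
        have "a * R + b * R = (a + b) * R" by (simp add: algebra_simps)
        thus ?thesis using ab by simp
      qed
      ultimately show ?thesis by simp
    qed
    moreover have "norm (a *\<^sub>R x + b *\<^sub>R y - p) \<le> R"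
    proof -
      have "norm (a *\<^sub>R x + b *\<^sub>R y - p) \<le> a * norm (x - p) + b * norm (y - p)"
        unfolding eq using ab by (metis abs_of_nonneg norm_scaleR norm_triangle_ineq)
      also have "\<dots> \<le> a * R + b * R"
        using x y ab by (intro add_mono mult_left_mono) (auto simp: K_def)
      finally have "norm (a *\<^sub>R x + b *\<^sub>R y - p) \<le> a * R + b * R" .
      moreover have "a * R + b * R = R"
      proof -
        have "a * R + b * R = (a + b) * R" by (simp add: algebra_simps)
        thus ?thesis using ab by simp
      qed
      ultimately show ?thesis by simp
    qed
    ultimately show "a *\<^sub>R x + b *\<^sub>R y \<in> K" by (simp add: K_def)
  qed
  have Kinv: "f ` K \<subseteq> K"
  proof
    fix y assume "y \<in> f ` K"
    then obtain w where w: "w \<in> K" "y = f w" by blast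
    obtain uw where uw: "uw \<in> U" "P (p - w) \<le> uw (p - w)" using HBU by blast
    have luw: "linear uw" using uw(1) unfolding U_def by blast
    have "uw (p - w) = uw (- (w - p))" by simp
    also have "\<dots> = - uw (w - p)" by (rule linear_neg[OF luw])
    finally have "uw (p - w) = - uw (w - p)" .
    moreover have "R \<le> uw (w - p)" using w(1) uw(1) unfolding K_def by blast
    ultimately have PR: "P (p - w) \<le> - R" using uw by simp
    have "R \<le> u (f w - p)" if "u \<in> U" for u using h1[OF that, of w] PR by simp
    moreover have "norm (f w - p) \<le> R"
    proof -
      have "norm (w - p) \<le> R" using w(1) unfolding K_def by blast
      thus ?thesis using ne[of w p] pq(2) by simp
    qed
    ultimately show "y \<in> K" using w by (simp add: K_def)
  qed
  have Kne: "nonexpansive_on K f" using ne by (simp add: nonexpansive_on_def)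
  have "K \<noteq> {}" using x0K by blast
  hence "\<exists>x\<in>K. f x = x"
    using assms(1) Kc Kb Kcv Kinv Kne unfolding fixed_point_property_def by (elim allE[of _ K] allE[of _ f]) (simp only: simp_thms)
  then obtain w where w: "w \<in> K" "f w = w" by blast
  obtain u where uU: "u \<in> U" using HBU by blast
  have "R \<le> u (w - p)" using w(1) uU unfolding K_def by blast
  also have "\<dots> \<le> norm (w - p)" using uU unfolding U_def by blast
  also have "\<dots> = dist p w" by (simp add: dist_norm norm_minus_commute)
  also have "\<dots> \<le> B" using B w by auto
  finally show False by (simp add: R_def)
qed

end
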